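(* Let $(\mathfrak g,\mu,P)$ be a Nijenhuis Lie algebra and $(M,P_M)$ a Nijenhuis representation over it. Then the map $\Psi_M:\mathrm C^\bullet_{\mathrm{Lie}}(\mathfrak g,M)\to\mathrm C^\bullet_{\mathrm{NjO}}(\mathfrak g,M)$ is a chain map, i.e. $\Psi_M\circ\delta_{\mathrm{Lie},M}=\delta_{\mathrm{NjO},M}\circ\Psi_M$.
   Context: All vector spaces are over a field $\mathbf k$ of characteristic $0$. A Nijenhuis Lie algebra is a Lie algebra $(\mathfrak g,\mu=[-,-]_\mu)$ with linear $P:\mathfrak g\to\mathfrak g$ satisfying $[Pa,Pb]_\mu=P([Pa,b]_\mu+[a,Pb]_\mu-P[a,b]_\mu)$. A Nijenhuis representation is a Lie algebra representation $M$ of $(\mathfrak g,\mu)$ (action $ax$) with linear $P_M:M\to M$ such that $P(a)P_M(x)=P_M(P(a)x+aP_M(x)-P_M(ax))$. Chevalley–Eilenberg complex: $\mathrm C^n_{\mathrm{Lie}}(\mathfrak g,M)=\mathrm{Hom}(\wedge^n\mathfrak g,M)$, $\delta_{\mathrm{Lie},M}(f)(a_1,\dots,a_{n+1})=\sum_i(-1)^{i-1}a_if(\dots,\widehat{a_i},\dots)+\sum_{i<j}(-1)^{i+j}f([a_i,a_j]_\mu,\dots,\widehat{a_i},\dots,\widehat{a_j},\dots)$. With $[a,b]_P:=[Pa,b]_\mu+[a,Pb]_\mu-P[a,b]_\mu$, let $\partial$ be the Chevalley–Eilenberg differential of $[-,-]_P$ with coefficients in $M$ with action $a\rhd x:=P(a)x$,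 i.e. $\partial(f)(a_1,\dots,a_{n+1})=\sum_i(-1)^{i-1}P(a_i)f(\dots,\widehat{a_i},\dots)+\sum_{i<j}(-1)^{i+j}f([a_i,a_j]_P,\dots,\widehat{a_i},\dots,\widehat{a_j},\dots)$. Then $\mathrm C^n_{\mathrm{NjO}}(\mathfrak g,M):=\mathrm{Hom}(\wedge^n\mathfrak g,M)$ with $\delta_{\mathrm{NjO},M}(f):=-P_M\circ\delta_{\mathrm{Lie},M}(f)+\partial(f)$. The map $\Psi_M$ is $\mathrm{Id}_M$ in degree $0$, and for $n\ge1$, $f\in\mathrm C^n_{\mathrm{Lie}}(\mathfrak g,M)$: $\Psi_M(f)(a_1,\dots,a_n)=\sum_{k=0}^n\sum_{1\le i_1<\dots<i_k\le n}(-1)^{n-k}P_M^{\,n-k}\big(f(a_1,\dots,P(a_{i_1}),\dots,P(a_{i_k}),\dots,a_n)\big)$, where $P$ is applied exactly to the arguments in positions $i_1,\dots,i_k$. *)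

theory Defs
  imports Complex_Main
begin

text \<open>Vector spaces over a field 'k (characteristic 0) are modelled by types
  'g, 'm of class ab_group_add together with scalar multiplications sg, sm
  satisfying the axioms of the library locale vector_space.
  n-cochains Hom(wedge^n g, M) are modelled as functions f :: 'g list \<Rightarrow> 'm
  that are multilinear and alternating on lists of length n
  (values on lists of other lengths are irrelevant).\<close>

definition lie_algebra ::
  "('k::field \<Rightarrow> 'g::ab_group_add \<Rightarrow> 'g) \<Rightarrow> ('g \<Rightarrow> 'g \<Rightarrow> 'g) \<Rightarrow> bool" where
  "lie_algebra sg br \<longleftrightarrow>
     Vector_Spaces.vector_space sg \<and>
     (\<forall>a. Vector_Spaces.linear sg sg (br a)) \<and> (\<forall>b. Vector_Spaces.linear sg sg (\<lambda>a. br a b)) \<and>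
     (\<forall>a. br a a = 0) \<and>
     (\<forall>a b c. br a (br b c) + br b (br c a) + br c (br a b) = 0)"

definition lie_rep ::
  "('k::field \<Rightarrow> 'g::ab_group_add \<Rightarrow> 'g) \<Rightarrow> ('k \<Rightarrow> 'm::ab_group_add \<Rightarrow> 'm) \<Rightarrow>
   ('g \<Rightarrow> 'g \<Rightarrow> 'g) \<Rightarrow> ('g \<Rightarrow> 'm \<Rightarrow> 'm) \<Rightarrow> bool" where
  "lie_rep sg sm br act \<longleftrightarrow>
     lie_algebra sg br \<and> Vector_Spaces.vector_space sm \<and>
     (\<forall>a. Vector_Spaces.linear sm sm (act a)) \<and> (\<forall>x. Vector_Spaces.linear sg sm (\<lambda>a. act a x)) \<and>
     (\<forall>a b x. act (br a b) x = act a (act b x) - act b (act a x))"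

definition nijenhuis_lie ::
  "('k::field \<Rightarrow> 'g::ab_group_add \<Rightarrow> 'g) \<Rightarrow> ('g \<Rightarrow> 'g \<Rightarrow> 'g) \<Rightarrow> ('g \<Rightarrow> 'g) \<Rightarrow> bool" where
  "nijenhuis_lie sg br P \<longleftrightarrow>
     lie_algebra sg br \<and> Vector_Spaces.linear sg sg P \<and>
     (\<forall>a b. br (P a) (P b) = P (br (P a) b + br a (P b) - P (br a b)))"

definition nijenhuis_rep ::
  "('k::field \<Rightarrow> 'g::ab_group_add \<Rightarrow> 'g) \<Rightarrow> ('k \<Rightarrow> 'm::ab_group_add \<Rightarrow> 'm) \<Rightarrow>
   ('g \<Rightarrow> 'g \<Rightarrow> 'g) \<Rightarrow> ('g \<Rightarrow> 'g) \<Rightarrow> ('g \<Rightarrow> 'm \<Rightarrow> 'm) \<Rightarrow> ('m \<Rightarrow> 'm) \<Rightarrow> bool" where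
  "nijenhuis_rep sg sm br P act PM \<longleftrightarrow>
     nijenhuis_lie sg br P \<and> lie_rep sg sm br act \<and> Vector_Spaces.linear sm sm PM \<and>
     (\<forall>a x. act (P a) (PM x) = PM (act (P a) x + act a (PM x) - PM (act a x)))"

definition cochain ::
  "('k::field \<Rightarrow> 'g::ab_group_add \<Rightarrow> 'g) \<Rightarrow> ('k \<Rightarrow> 'm::ab_group_add \<Rightarrow> 'm) \<Rightarrow>
   nat \<Rightarrow> ('g list \<Rightarrow> 'm) \<Rightarrow> bool" where
  "cochain sg sm n f \<longleftrightarrow>
     (\<forall>as i a b. length as = n \<longrightarrow> i < n \<longrightarrow>
        f (as[i := a + b]) = f (as[i := a]) + f (as[i := b])) \<and>
     (\<forall>as i c a. length as = n \<longrightarrow> i < n \<longrightarrow>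
        f (as[i := sg c a]) = sm c (f (as[i := a]))) \<and>
     (\<forall>as i j. length as = n \<longrightarrow> i < j \<longrightarrow> j < n \<longrightarrow> as ! i = as ! j \<longrightarrow> f as = 0)"

definition sgnp :: "nat \<Rightarrow> 'm::ab_group_add \<Rightarrow> 'm" where
  "sgnp i x = (if even i then x else - x)"

definition del :: "nat \<Rightarrow> 'a list \<Rightarrow> 'a list" where
  "del i as = take i as @ drop (Suc i) as"

text \<open>Chevalley--Eilenberg differential of bracket br with coefficients in action act,
  evaluated on a list as = (a_1,...,a_{n+1}) (0-indexed positions, signs adjusted).\<close>
definition CE_diff ::
  "('g \<Rightarrow> 'g \<Rightarrow> 'g) \<Rightarrow> ('g \<Rightarrow> 'm::ab_group_add \<Rightarrow> 'm) \<Rightarrow> ('g list \<Rightarrow> 'm) \<Rightarrow> ('g list \<Rightarrow> 'm)" where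
  "CE_diff br act f as =
     (\<Sum>i<length as. sgnp i (act (as ! i) (f (del i as))))
   + (\<Sum>j<length as. \<Sum>i<j. sgnp (i + j) (f (br (as ! i) (as ! j) # del i (del j as))))"

definition delta_Lie ::
  "('g \<Rightarrow> 'g \<Rightarrow> 'g) \<Rightarrow> ('g \<Rightarrow> 'm::ab_group_add \<Rightarrow> 'm) \<Rightarrow> ('g list \<Rightarrow> 'm) \<Rightarrow> ('g list \<Rightarrow> 'm)" where
  "delta_Lie br act f = CE_diff br act f"

definition bracketP :: "('g::ab_group_add \<Rightarrow> 'g \<Rightarrow> 'g) \<Rightarrow> ('g \<Rightarrow> 'g) \<Rightarrow> 'g \<Rightarrow> 'g \<Rightarrow> 'g" where
  "bracketP br P a b = br (P a) b + br a (P b) - P (br a b)"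

definition delta_NjO ::
  "('g::ab_group_add \<Rightarrow> 'g \<Rightarrow> 'g) \<Rightarrow> ('g \<Rightarrow> 'g) \<Rightarrow> ('g \<Rightarrow> 'm::ab_group_add \<Rightarrow> 'm) \<Rightarrow> ('m \<Rightarrow> 'm)
   \<Rightarrow> ('g list \<Rightarrow> 'm) \<Rightarrow> ('g list \<Rightarrow> 'm)" where
  "delta_NjO br P act PM f as =
     - PM (delta_Lie br act f as) + CE_diff (bracketP br P) (\<lambda>a x. act (P a) x) f as"

definition applyP_at :: "('g \<Rightarrow> 'g) \<Rightarrow> nat set \<Rightarrow> 'g list \<Rightarrow> 'g list" where
  "applyP_at P S as = map (\<lambda>i. if i \<in> S then P (as ! i) else as ! i) [0..<length as]"

definition Psi ::
  "('g \<Rightarrow> 'g) \<Rightarrow> ('m::ab_group_add \<Rightarrow> 'm) \<Rightarrow> ('g list \<Rightarrow> 'm) \<Rightarrow> ('g list \<Rightarrow> 'm)" where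
  "Psi P PM f as =
     (\<Sum>S | S \<subseteq> {..<length as}.
        sgnp (length as - card S) ((PM ^^ (length as - card S)) (f (applyP_at P S as))))"

end

theory Submission
  imports Defs
begin

definition selP :: "('g \<Rightarrow> 'g) \<Rightarrow> bool \<Rightarrow> 'g \<Rightarrow> 'g" where
  "selP P b a = (if b then P a else a)"
definition cf :: "bool list \<Rightarrow> nat" where
  "cf bs = length (filter Not bs)"
definition ins :: "nat \<Rightarrow> 'a \<Rightarrow> 'a list \<Rightarrow> 'a list" where
  "ins i b cs = take i cs @ b # drop i cs"
definition PsiL :: "('m::ab_group_add \<Rightarrow> 'm) \<Rightarrow> ('g \<Rightarrow> 'g) \<Rightarrow> ('g list \<Rightarrow> 'm) \<Rightarrow> 'g list \<Rightarrow> 'm" where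
  "PsiL Q P f as = (\<Sum>bs\<in>{bs. length bs = length as}. (Q ^^ cf bs) (f (map2 (selP P) bs as)))"

lemma fin_lists: "finite {bs::bool list. length bs = N}"
  using finite_lists_length_eq[OF finite_UNIV[where 'a=bool], of N] by simp

lemma length_ins[simp]: "i \<le> length cs \<Longrightarrow> length (ins i b cs) = Suc (length cs)"
  by (simp add: ins_def)

lemma del_ins[simp]: "i \<le> length cs \<Longrightarrow> del i (ins i b cs) = cs"
  by (simp add: ins_def del_def)

lemma ins_nth[simp]: "i \<le> length cs \<Longrightarrow> ins i b cs ! i = b"
  by (simp add: ins_def nth_append)

lemma ins_nth_less: "k < i \<Longrightarrow> i \<le> length cs \<Longrightarrow> ins i b cs ! k = cs ! k"
  by (simp add: ins_def nth_append)

lemma ins_del: "i < length bs \<Longrightarrow> ins i (bs ! i) (del i bs) = bs"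
  by (simp add: ins_def del_def min_def Cons_nth_drop_Suc)

lemma del_length[simp]: "i < length bs \<Longrightarrow> length (del i bs) = length bs - 1"
  by (simp add: del_def)

lemma del_nth_less: "k < i \<Longrightarrow> i < length bs \<Longrightarrow> del i bs ! k = bs ! k"
  by (simp add: del_def nth_append)

lemma cf_ins: "i \<le> length cs \<Longrightarrow> cf (ins i b cs) = cf cs + (if b then 0 else 1)"
proof -
  assume "i \<le> length cs"
  have "cf cs = length (filter Not (take i cs)) + length (filter Not (drop i cs))"
    unfolding cf_def by (metis append_take_drop_id filter_append length_append)
  then show ?thesis by (simp add: cf_def ins_def)
qed

lemma del_map2: "length xs = length ys \<Longrightarrow> del i (map2 h xs ys) = map2 h (del i xs) (del i ys)"
  by (simp add: del_def take_map drop_map take_zip drop_zip zip_append)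

lemma sum_ins:
  assumes "i \<le> N"
  shows "(\<Sum>bs\<in>{bs::bool list. length bs = Suc N}. g bs)
       = (\<Sum>cs\<in>{cs::bool list. length cs = N}. g (ins i True cs) + g (ins i False cs))"
proof -
  have "(\<Sum>cs\<in>{cs::bool list. length cs = N}. g (ins i True cs) + g (ins i False cs))
      = (\<Sum>cs\<in>{cs::bool list. length cs = N}. \<Sum>b\<in>UNIV. g (ins i b cs))"
    by (simp add: UNIV_bool add.commute)
  also have "\<dots> = (\<Sum>p\<in>{cs::bool list. length cs = N} \<times> UNIV. g (ins i (snd p) (fst p)))"
    by (simp add: sum.cartesian_product split_def)
  also have "\<dots> = (\<Sum>bs\<in>{bs::bool list. length bs = Suc N}. g bs)"
    apply (rule sum.reindex_bij_witness[where i="\<lambda>bs. (del i bs, bs ! i)" and j="\<lambda>p. ins i (snd p) (fst p)"])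
    using assms by (auto simp: ins_del)
  finally show ?thesis by simp
qed

lemma additive_sum:
  fixes g :: "'a::ab_group_add \<Rightarrow> 'b::ab_group_add"
  assumes "\<And>x y. g (x + y) = g x + g y"
  shows "g (sum h A) = (\<Sum>x\<in>A. g (h x))"
proof -
  have g0: "g 0 = 0" using assms[of 0 0] by simp
  show ?thesis
  proof (cases "finite A")
    case True then show ?thesis by (induction A rule: finite_induct) (auto simp: g0 assms)
  qed (simp add: g0)
qed

lemma funpow_additive:
  fixes Q :: "'a::ab_group_add \<Rightarrow> 'a"
  assumes "\<And>x y. Q (x + y) = Q x + Q y"
  shows "(Q ^^ k) (x + y) = (Q ^^ k) x + (Q ^^ k) y"
  by (induction k) (auto simp: assms)

lemma sgnp_add: "sgnp i (x + y) = sgnp i x + sgnp i y"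
  by (simp add: sgnp_def)

lemma sgnp_PM:
  fixes PM :: "'m::ab_group_add \<Rightarrow> 'm"
  assumes "\<And>x y. PM (x + y) = PM x + PM y"
  shows "sgnp k ((PM ^^ k) x) = ((\<lambda>x. - PM x) ^^ k) x"
proof -
  have neg: "PM (- x) = - PM x" for x
  proof -
    have "PM 0 = 0" using assms[of 0 0] by simp
    then have "PM x + PM (- x) = 0" using assms[of x "- x"] by simp
    then show ?thesis by (rule minus_unique[symmetric])
  qed
  show ?thesis
  proof (induction k)
    case (Suc k)
    show ?case by (simp add: Suc.IH[symmetric] sgnp_def neg)
  qed (simp add: sgnp_def)
qed

lemma Psi_PsiL:
  fixes PM :: "'m::ab_group_add \<Rightarrow> 'm"
  assumes "\<And>x y. PM (x + y) = PM x + PM y"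
  shows "Psi P PM f as = PsiL (\<lambda>x. - PM x) P f as"
  unfolding Psi_def PsiL_def
  apply (rule sym)
proof (rule sum.reindex_bij_witness[where i="\<lambda>S. map (\<lambda>i. i \<in> S) [0..<length as]"
      and j="\<lambda>bs. {i. i < length as \<and> bs ! i}"])
  fix bs :: "bool list" assume bs: "bs \<in> {bs. length bs = length as}"
  have c: "card {i. i < length as \<and> bs ! i} = length (filter id bs)"
    using bs by (simp add: length_filter_conv_card)
  have c2: "length as - length (filter id bs) = cf bs"
    using bs sum_length_filter_compl[of id bs] by (simp add: cf_def)
  have ap: "applyP_at P {i. i < length as \<and> bs ! i} as = map2 (selP P) bs as"
    using bs by (intro nth_equalityI) (auto simp: applyP_at_def selP_def)
  show "sgnp (length as - card {i. i < length as \<and> bs ! i})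
         ((PM ^^ (length as - card {i. i < length as \<and> bs ! i}))
           (f (applyP_at P {i. i < length as \<and> bs ! i} as))) =
        ((\<lambda>x. - PM x) ^^ cf bs) (f (map2 (selP P) bs as))"
    unfolding c c2 ap by (rule sgnp_PM[where PM=PM, OF assms, where k="cf bs" and x="f (map2 (selP P) bs as)"])
next
  fix bs :: "bool list" assume bs: "bs \<in> {bs. length bs = length as}"
  show "map (\<lambda>i. i \<in> {i. i < length as \<and> bs ! i}) [0..<length as] = bs"
    using bs by (intro nth_equalityI) auto
  show "{i. i < length as \<and> bs ! i} \<in> {S. S \<subseteq> {..<length as}}" by auto
next
  fix S assume S: "S \<in> {S. S \<subseteq> {..<length as}}"
  show "{i. i < length as \<and> map (\<lambda>i. i \<in> S) [0..<length as] ! i} = S"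
    using S by auto
  show "map (\<lambda>i. i \<in> S) [0..<length as] \<in> {bs. length bs = length as}" by simp
qed


lemma additive_neg:
  fixes g :: "'a::ab_group_add \<Rightarrow> 'b::ab_group_add"
  assumes "\<And>x y. g (x + y) = g x + g y"
  shows "g (- x) = - g x"
proof -
  have "g 0 = 0" using assms[of 0 0] by simp
  then have "g x + g (- x) = 0" using assms[of x "- x"] by simp
  then show ?thesis by (rule minus_unique[symmetric])
qed

lemma additive_diff:
  fixes g :: "'a::ab_group_add \<Rightarrow> 'b::ab_group_add"
  assumes "\<And>x y. g (x + y) = g x + g y"
  shows "g (x - y) = g x - g y"
  using assms[of x "- y"] additive_neg[of g y, OF assms] by simp

lemma sgnp_comm:
  fixes g :: "'a::ab_group_add \<Rightarrow> 'b::ab_group_add"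
  assumes "\<And>x y. g (x + y) = g x + g y"
  shows "g (sgnp i x) = sgnp i (g x)"
  using additive_neg[of g, OF assms] by (simp add: sgnp_def)

lemma sgnp_sum: "sgnp i (sum h A) = (\<Sum>x\<in>A. sgnp i (h x))"
  by (rule additive_sum) (rule sgnp_add)

lemma act_comm:
  fixes Q :: "'m::ab_group_add \<Rightarrow> 'm"
  assumes Qadd: "\<And>x y. Q (x + y) = Q x + Q y"
    and LQ: "\<And>x. A (Q x) + Q (B (Q x)) = Q (A x) + Q (Q (B x))"
  shows "(Q ^^ k) (A x) + Q ((Q ^^ k) (B x)) = Q (B ((Q ^^ k) x)) + A ((Q ^^ k) x)"
proof -
  define L where "L = (\<lambda>x. A x + Q (B x))"
  have LQ': "L (Q x) = Q (L x)" for x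
    unfolding L_def using LQ Qadd by simp
  have Lk: "L ((Q ^^ k) x) = (Q ^^ k) (L x)" for x
    by (induction k) (auto simp: LQ')
  have "(Q ^^ k) (A x) + Q ((Q ^^ k) (B x)) = (Q ^^ k) (L x)"
    unfolding L_def by (simp add: funpow_additive[OF Qadd] funpow_swap1)
  also have "\<dots> = L ((Q ^^ k) x)" by (rule Lk[symmetric])
  finally show ?thesis unfolding L_def by (simp add: add.commute)
qed


lemma selP_T[simp]: "selP P True a = P a" and selP_F[simp]: "selP P False a = a"
  by (simp_all add: selP_def)
lemma per_i:
  fixes Q :: "'m::ab_group_add \<Rightarrow> 'm" and act :: "'g \<Rightarrow> 'm \<Rightarrow> 'm"
  assumes Qadd: "\<And>x y. Q (x + y) = Q x + Q y"
    and actadd: "\<And>a x y. act a (x + y) = act a x + act a y"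
    and LQ: "\<And>a x. act (P a) (Q x) + Q (act a (Q x)) = Q (act (P a) x) + Q (Q (act a x))"
    and len: "length as = Suc n" and i: "i < Suc n"
  shows "(\<Sum>bs\<in>{bs. length bs = Suc n}. (Q ^^ cf bs) (sgnp i (act (map2 (selP P) bs as ! i)
            (f (del i (map2 (selP P) bs as))))))
       = Q (sgnp i (act (as ! i) (PsiL Q P f (del i as))))
         + sgnp i (act (P (as ! i)) (PsiL Q P f (del i as)))"
proof -
  have ld: "length (del i as) = n" using len i by simp
  have c1: "(Q ^^ k) (sgnp i y) = sgnp i ((Q ^^ k) y)" for k y
    by (rule sgnp_comm[where g="Q ^^ k"]) (rule funpow_additive[where Q=Q, OF Qadd])
  have s1: "Q (sum h A) = (\<Sum>x\<in>A. Q (h x))" for h and A :: "'z set"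
    by (rule additive_sum[where g=Q]) (rule Qadd)
  have s2: "act a (sum h A) = (\<Sum>x\<in>A. act a (h x))" for a h and A :: "'z set"
    by (rule additive_sum[where g="act a"]) (rule actadd)
  have c2: "Q (sgnp i y) = sgnp i (Q y)" for y
    by (rule sgnp_comm[where g=Q]) (rule Qadd)
  let ?y = "\<lambda>cs. f (map2 (selP P) cs (del i as))"
  have "(\<Sum>bs\<in>{bs. length bs = Suc n}. (Q ^^ cf bs) (sgnp i (act (map2 (selP P) bs as ! i)
            (f (del i (map2 (selP P) bs as))))))
     = (\<Sum>cs\<in>{cs. length cs = n}. (Q ^^ cf cs) (sgnp i (act (P (as ! i)) (?y cs)))
          + Q ((Q ^^ cf cs) (sgnp i (act (as ! i) (?y cs)))))"
    apply (subst sum_ins[of i n])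
    using i apply simp
    apply (rule sum.cong, rule refl)
    using i len by (simp add: del_map2 cf_ins)
  also have "\<dots> = (\<Sum>cs\<in>{cs. length cs = n}. Q (sgnp i (act (as ! i) ((Q ^^ cf cs) (?y cs))))
          + sgnp i (act (P (as ! i)) ((Q ^^ cf cs) (?y cs))))"
  proof (rule sum.cong, rule refl)
    fix cs :: "bool list"
    have e: "(Q ^^ cf cs) (act (P (as ! i)) (?y cs)) + Q ((Q ^^ cf cs) (act (as ! i) (?y cs)))
        = Q (act (as ! i) ((Q ^^ cf cs) (?y cs))) + act (P (as ! i)) ((Q ^^ cf cs) (?y cs))"
      by (rule act_comm[where Q=Q and A="act (P (as ! i))" and B="act (as ! i)", OF Qadd LQ])
    have "sgnp i ((Q ^^ cf cs) (act (P (as ! i)) (?y cs)) + Q ((Q ^^ cf cs) (act (as ! i) (?y cs))))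
        = sgnp i (Q (act (as ! i) ((Q ^^ cf cs) (?y cs))) + act (P (as ! i)) ((Q ^^ cf cs) (?y cs)))"
      by (simp only: e)
    then show "(Q ^^ cf cs) (sgnp i (act (P (as ! i)) (?y cs)))
          + Q ((Q ^^ cf cs) (sgnp i (act (as ! i) (?y cs))))
        = Q (sgnp i (act (as ! i) ((Q ^^ cf cs) (?y cs))))
          + sgnp i (act (P (as ! i)) ((Q ^^ cf cs) (?y cs)))"
      by (simp only: sgnp_add c1 c2)
  qed
  also have "\<dots> = Q (sgnp i (act (as ! i) (PsiL Q P f (del i as))))
         + sgnp i (act (P (as ! i)) (PsiL Q P f (del i as)))"
    unfolding PsiL_def ld
    by (simp add: s1 s2 sgnp_sum sum.distrib)
  finally show ?thesis .
qed



lemma br_core: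
  fixes Q :: "'m::ab_group_add \<Rightarrow> 'm" and F :: "'g::ab_group_add \<Rightarrow> 'm"
  assumes Qadd: "\<And>x y. Q (x + y) = Q x + Q y"
    and Fadd: "\<And>u v. F (u + v) = F u + F v"
    and sm: "u2 + u3 = cP + pac" and wp: "w = pw"
  shows "(Q ^^ k) (F w) + (Q ^^ Suc k) (F u2) + ((Q ^^ Suc k) (F u3) + (Q ^^ Suc (Suc k)) (F ac))
       = Q ((Q ^^ k) (F pac) + (Q ^^ Suc k) (F ac)) + ((Q ^^ k) (F pw) + (Q ^^ Suc k) (F cP))"
  unfolding funpow.simps(2) comp_apply wp
proof -
  have "F u2 + F u3 = F cP + F pac" using sm Fadd by metis
  then have "(Q ^^ k) (F u2) + (Q ^^ k) (F u3) = (Q ^^ k) (F cP) + (Q ^^ k) (F pac)"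
    by (metis funpow_additive[where Q=Q, OF Qadd])
  then have h: "Q ((Q ^^ k) (F u2)) + Q ((Q ^^ k) (F u3)) = Q ((Q ^^ k) (F cP)) + Q ((Q ^^ k) (F pac))"
    by (metis Qadd)
  have "(Q ^^ k) (F pw) + Q ((Q ^^ k) (F u2)) + (Q ((Q ^^ k) (F u3)) + Q (Q ((Q ^^ k) (F ac))))
      = (Q ^^ k) (F pw) + (Q ((Q ^^ k) (F u2)) + Q ((Q ^^ k) (F u3))) + Q (Q ((Q ^^ k) (F ac)))"
    by (simp only: add_ac)
  also have "\<dots> = (Q ^^ k) (F pw) + (Q ((Q ^^ k) (F cP)) + Q ((Q ^^ k) (F pac))) + Q (Q ((Q ^^ k) (F ac)))"
    by (simp only: h)
  also have "\<dots> = Q ((Q ^^ k) (F pac) + Q ((Q ^^ k) (F ac))) + ((Q ^^ k) (F pw) + Q ((Q ^^ k) (F cP)))"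
    by (simp only: Qadd add_ac)
  finally show "(Q ^^ k) (F pw) + Q ((Q ^^ k) (F u2)) + (Q ((Q ^^ k) (F u3)) + Q (Q ((Q ^^ k) (F ac))))
      = Q ((Q ^^ k) (F pac) + Q ((Q ^^ k) (F ac))) + ((Q ^^ k) (F pw) + Q ((Q ^^ k) (F cP)))" .
qed

lemma eval_ij:
  assumes "length ds = m" "i < j" "j \<le> Suc m" "length as = Suc (Suc m)"
  shows "map2 (selP P) (ins j b (ins i b' ds)) as ! i = selP P b' (as ! i)"
    and "map2 (selP P) (ins j b (ins i b' ds)) as ! j = selP P b (as ! j)"
    and "del i (del j (map2 (selP P) (ins j b (ins i b' ds)) as)) = map2 (selP P) ds (del i (del j as))"
    and "cf (ins j b (ins i b' ds)) = cf ds + (if b' then 0 else 1) + (if b then 0 else 1)"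
  using assms by (simp_all add: ins_nth_less del_map2 cf_ins)

lemma per_ij:
  fixes Q :: "'m::ab_group_add \<Rightarrow> 'm" and f :: "'g::ab_group_add list \<Rightarrow> 'm"
  assumes Qadd: "\<And>x y. Q (x + y) = Q x + Q y"
    and f0add: "\<And>u v y. length y = m \<Longrightarrow> f ((u + v) # y) = f (u # y) + f (v # y)"
    and nij: "\<And>a b. br (P a) (P b) = P (bracketP br P a b)"
    and len: "length as = Suc (Suc m)" and ij: "i < j" "j < Suc (Suc m)"
  shows "(\<Sum>bs\<in>{bs. length bs = Suc (Suc m)}. (Q ^^ cf bs)
            (f (br (map2 (selP P) bs as ! i) (map2 (selP P) bs as ! j)
                # del i (del j (map2 (selP P) bs as)))))
       = Q (PsiL Q P f (br (as ! i) (as ! j) # del i (del j as)))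
         + PsiL Q P f (bracketP br P (as ! i) (as ! j) # del i (del j as))"
proof -
  define rest where "rest = del i (del j as)"
  have lr: "length rest = m" using len ij by (simp add: rest_def)
  define g where "g = (\<lambda>bs. (Q ^^ cf bs)
            (f (br (map2 (selP P) bs as ! i) (map2 (selP P) bs as ! j)
                # del i (del j (map2 (selP P) bs as)))))"
  let ?F = "\<lambda>ds u. f (u # map2 (selP P) ds rest)"
  have s1: "Q (sum h A) = (\<Sum>x\<in>A. Q (h x))" for h and A :: "'z set"
    by (rule additive_sum[where g=Q]) (rule Qadd)
  have "(\<Sum>bs\<in>{bs. length bs = Suc (Suc m)}. g bs)
      = (\<Sum>cs\<in>{cs. length cs = Suc m}. g (ins j True cs) + g (ins j False cs))"
    using ij by (intro sum_ins) simp
  also have "\<dots> = (\<Sum>ds\<in>{ds. length ds = m}.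
       (g (ins j True (ins i True ds)) + g (ins j False (ins i True ds)))
     + (g (ins j True (ins i False ds)) + g (ins j False (ins i False ds))))"
    using ij by (intro sum_ins) simp
  also have "\<dots> = (\<Sum>ds\<in>{ds. length ds = m}.
       Q ((Q ^^ cf ds) (?F ds (P (br (as ! i) (as ! j)))) + (Q ^^ Suc (cf ds)) (?F ds (br (as ! i) (as ! j))))
     + ((Q ^^ cf ds) (?F ds (P (bracketP br P (as ! i) (as ! j)))) + (Q ^^ Suc (cf ds)) (?F ds (bracketP br P (as ! i) (as ! j)))))"
  proof (rule sum.cong, rule refl)
    fix ds :: "bool list" assume ds: "ds \<in> {ds. length ds = m}"
    have Fadd: "?F ds (u + v) = ?F ds u + ?F ds v" for u v
      using ds lr by (intro f0add) simp
    have ev: "length ds = m" "j \<le> Suc m" using ds ij by auto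
    note ev2 = eval_ij[OF ev(1) ij(1) ev(2) len]
    have g1: "g (ins j True (ins i True ds)) = (Q ^^ cf ds) (?F ds (br (P (as ! i)) (P (as ! j))))"
      unfolding g_def ev2 rest_def by simp
    have g2: "g (ins j False (ins i True ds)) = (Q ^^ Suc (cf ds)) (?F ds (br (P (as ! i)) (as ! j)))"
      unfolding g_def ev2 rest_def by simp
    have g3: "g (ins j True (ins i False ds)) = (Q ^^ Suc (cf ds)) (?F ds (br (as ! i) (P (as ! j))))"
      unfolding g_def ev2 rest_def by simp
    have g4: "g (ins j False (ins i False ds)) = (Q ^^ Suc (Suc (cf ds))) (?F ds (br (as ! i) (as ! j)))"
      unfolding g_def ev2 rest_def by simp
    show "(g (ins j True (ins i True ds)) + g (ins j False (ins i True ds)))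
     + (g (ins j True (ins i False ds)) + g (ins j False (ins i False ds))) =
       Q ((Q ^^ cf ds) (?F ds (P (br (as ! i) (as ! j)))) + (Q ^^ Suc (cf ds)) (?F ds (br (as ! i) (as ! j))))
     + ((Q ^^ cf ds) (?F ds (P (bracketP br P (as ! i) (as ! j)))) + (Q ^^ Suc (cf ds)) (?F ds (bracketP br P (as ! i) (as ! j))))"
      unfolding g1 g2 g3 g4
      by (rule br_core[where Q=Q and F="?F ds", OF Qadd Fadd]) (simp_all add: bracketP_def nij)
  qed
  also have "\<dots> = Q (PsiL Q P f (br (as ! i) (as ! j) # rest))
         + PsiL Q P f (bracketP br P (as ! i) (as ! j) # rest)"
  proof -
    have ps: "PsiL Q P f (c # rest) = (\<Sum>ds\<in>{ds. length ds = m}.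
       (Q ^^ cf ds) (?F ds (P c)) + (Q ^^ Suc (cf ds)) (?F ds c))" for c
      unfolding PsiL_def using lr
      by (simp add: sum_ins[of 0 m] ins_def cf_def)
    show ?thesis unfolding ps by (simp add: s1 sum.distrib Qadd)
  qed
  finally show ?thesis unfolding g_def rest_def .
qed


theorem proposition6p3:
  fixes sg :: "'k::field_char_0 \<Rightarrow> 'g::ab_group_add \<Rightarrow> 'g"
    and sm :: "'k \<Rightarrow> 'm::ab_group_add \<Rightarrow> 'm"
    and br :: "'g \<Rightarrow> 'g \<Rightarrow> 'g" and P :: "'g \<Rightarrow> 'g"
    and act :: "'g \<Rightarrow> 'm \<Rightarrow> 'm" and PM :: "'m \<Rightarrow> 'm"
    and f :: "'g list \<Rightarrow> 'm" and n :: nat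
  assumes "nijenhuis_rep sg sm br P act PM"
    and "cochain sg sm n f"
    and "length as = Suc n"
  shows "Psi P PM (delta_Lie br act f) as = delta_NjO br P act PM (Psi P PM f) as"
proof -
  note nr = assms(1)[unfolded nijenhuis_rep_def nijenhuis_lie_def lie_rep_def]
  have PMadd: "PM (x + y) = PM x + PM y" for x y
    using nr Vector_Spaces.linear_iff[where f=PM] by blast
  have actadd: "act a (x + y) = act a x + act a y" for a x y
    using nr Vector_Spaces.linear_iff[where f="act a"] by blast
  have nij: "br (P a) (P b) = P (bracketP br P a b)" for a b
    using nr by (simp add: bracketP_def)
  have nrep: "act (P a) (PM x) = PM (act (P a) x + act a (PM x) - PM (act a x))" for a x
    using nr by blast
  have fadd: "\<And>as i a b. length as = n \<Longrightarrow> i < n \<Longrightarrow>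
        f (as[i := a + b]) = f (as[i := a]) + f (as[i := b])"
    using assms(2) unfolding cochain_def by blast
  have len: "length as = Suc n" by (rule assms(3))
  define Q where "Q = (\<lambda>x. - PM x)"
  have Qadd: "Q (x + y) = Q x + Q y" for x y
    unfolding Q_def by (simp add: PMadd)
  have PMneg: "PM (- x) = - PM x" for x
    by (rule additive_neg[where g=PM]) (rule PMadd)
  have PMdiff: "PM (x - y) = PM x - PM y" for x y
    by (rule additive_diff[where g=PM]) (rule PMadd)
  have actneg: "act a (- x) = - act a x" for a x
    by (rule additive_neg[where g="act a"]) (rule actadd)
  have LQ: "act (P a) (Q x) + Q (act a (Q x)) = Q (act (P a) x) + Q (Q (act a x))" for a x
    unfolding Q_def using nrep[of a x] by (simp add: actneg PMneg PMadd PMdiff)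
  have negQ: "- PM y = Q y" for y by (simp add: Q_def)
  have c1: "(Q ^^ k) (sgnp i y) = sgnp i ((Q ^^ k) y)" for k i y
    by (rule sgnp_comm[where g="Q ^^ k"]) (rule funpow_additive[where Q=Q, OF Qadd])
  have c2: "Q (sgnp i y) = sgnp i (Q y)" for i y
    by (rule sgnp_comm[where g=Q]) (rule Qadd)
  have s1: "Q (sum h A) = (\<Sum>x\<in>A. Q (h x))" for h and A :: "'z set"
    by (rule additive_sum[where g=Q]) (rule Qadd)
  have qk: "(Q ^^ k) (sum h A) = (\<Sum>x\<in>A. (Q ^^ k) (h x))" for k h and A :: "'z set"
    by (rule additive_sum[where g="Q ^^ k"]) (rule funpow_additive[where Q=Q, OF Qadd])
  have qkadd: "(Q ^^ k) (x + y) = (Q ^^ k) x + (Q ^^ k) y" for k x y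
    by (rule funpow_additive[where Q=Q, OF Qadd])
  have PsiE: "Psi P PM g = PsiL Q P g" for g
    unfolding Q_def by (rule ext, rule Psi_PsiL) (rule PMadd)
  define BS where "BS = {bs :: bool list. length bs = Suc n}"
  define X where "X = (\<lambda>bs. map2 (selP P) bs as)"
  define LA where "LA = (\<lambda>i. \<Sum>bs\<in>BS. (Q ^^ cf bs) (sgnp i (act (X bs ! i) (f (del i (X bs))))))"
  define LB where "LB = (\<lambda>i j. \<Sum>bs\<in>BS. (Q ^^ cf bs)
      (sgnp (i + j) (f (br (X bs ! i) (X bs ! j) # del i (del j (X bs))))))"
  define Phi where "Phi = PsiL Q P f"
  have lhs: "Psi P PM (delta_Lie br act f) as = (\<Sum>i<Suc n. LA i) + (\<Sum>j<Suc n. \<Sum>i<j. LB i j)"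
  proof -
    have "Psi P PM (delta_Lie br act f) as = (\<Sum>bs\<in>BS. (Q ^^ cf bs) (CE_diff br act f (X bs)))"
      unfolding PsiE PsiL_def delta_Lie_def BS_def X_def len ..
    also have "\<dots> = (\<Sum>bs\<in>BS. (\<Sum>i<Suc n. (Q ^^ cf bs) (sgnp i (act (X bs ! i) (f (del i (X bs))))))
        + (\<Sum>j<Suc n. \<Sum>i<j. (Q ^^ cf bs)
      (sgnp (i + j) (f (br (X bs ! i) (X bs ! j) # del i (del j (X bs)))))))"
    proof (rule sum.cong, rule refl)
      fix bs assume "bs \<in> BS"
      then have "length (X bs) = Suc n" by (simp add: BS_def X_def len)
      then show "(Q ^^ cf bs) (CE_diff br act f (X bs)) = (\<Sum>i<Suc n. (Q ^^ cf bs) (sgnp i (act (X bs ! i) (f (del i (X bs))))))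
        + (\<Sum>j<Suc n. \<Sum>i<j. (Q ^^ cf bs)
      (sgnp (i + j) (f (br (X bs ! i) (X bs ! j) # del i (del j (X bs))))))"
        unfolding CE_diff_def by (simp add: qk qkadd)
    qed
    also have "\<dots> = (\<Sum>i<Suc n. LA i) + (\<Sum>bs\<in>BS. \<Sum>j<Suc n. \<Sum>i<j. (Q ^^ cf bs)
      (sgnp (i + j) (f (br (X bs ! i) (X bs ! j) # del i (del j (X bs))))))"
      unfolding sum.distrib LA_def by (subst sum.swap) (rule refl)
    also have "(\<Sum>bs\<in>BS. \<Sum>j<Suc n. \<Sum>i<j. (Q ^^ cf bs)
      (sgnp (i + j) (f (br (X bs ! i) (X bs ! j) # del i (del j (X bs)))))) = (\<Sum>j<Suc n. \<Sum>i<j. LB i j)"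
      unfolding LB_def by (subst sum.swap) (simp add: sum.swap[of _ BS])
    finally show ?thesis .
  qed
  have rhs: "delta_NjO br P act PM (Psi P PM f) as
     = (\<Sum>i<Suc n. Q (sgnp i (act (as ! i) (Phi (del i as)))) + sgnp i (act (P (as ! i)) (Phi (del i as))))
     + (\<Sum>j<Suc n. \<Sum>i<j. Q (sgnp (i + j) (Phi (br (as ! i) (as ! j) # del i (del j as))))
          + sgnp (i + j) (Phi (bracketP br P (as ! i) (as ! j) # del i (del j as))))"
    unfolding delta_NjO_def delta_Lie_def CE_diff_def PsiE Phi_def[symmetric] len negQ
    by (simp only: Qadd s1 sum.distrib add_ac)
  have ai: "LA i = Q (sgnp i (act (as ! i) (Phi (del i as)))) + sgnp i (act (P (as ! i)) (Phi (del i as)))"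
    if "i < Suc n" for i
    unfolding LA_def BS_def X_def Phi_def
    by (rule per_i[where Q=Q and act=act and P=P and as=as and f=f, OF Qadd actadd LQ len that])
  have bij: "LB i j = Q (sgnp (i + j) (Phi (br (as ! i) (as ! j) # del i (del j as))))
          + sgnp (i + j) (Phi (bracketP br P (as ! i) (as ! j) # del i (del j as)))"
    if jn: "j < Suc n" and ijl: "i < j" for i j
  proof -
    obtain m where m: "n = Suc m" using jn ijl by (cases n) auto
    have f0add: "f ((u + v) # y) = f (u # y) + f (v # y)" if "length y = m" for u v y
      using fadd[of "u # y" 0 u v] that m by simp
    have "LB i j = sgnp (i + j) (\<Sum>bs\<in>BS. (Q ^^ cf bs)
      (f (br (X bs ! i) (X bs ! j) # del i (del j (X bs)))))"
      unfolding LB_def c1 sgnp_sum ..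
    also have "\<dots> = sgnp (i + j) (Q (Phi (br (as ! i) (as ! j) # del i (del j as)))
          + Phi (bracketP br P (as ! i) (as ! j) # del i (del j as)))"
      unfolding BS_def X_def Phi_def m
      using per_ij[where Q=Q and f=f and m=m and br=br and P=P and as=as and i=i and j=j, OF Qadd f0add nij len[unfolded m] ijl jn[unfolded m]]
      by simp
    finally show ?thesis by (simp add: sgnp_add c2)
  qed
  show ?thesis unfolding lhs rhs
    by (simp add: ai bij)
qed

end
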